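(* Consider algorithm DIST-OPT as described in the context with all delays bounded by $\tau_{\max}$, and let $\boldsymbol\lambda(t)=(\underline\lambda(t),\bar\lambda(t))\in\mathbb R^{2N}$ be its dual iterates, with the convention $\boldsymbol\lambda(s)=0$ for $s<0$. Define $$g(t)=\begin{bmatrix}\underline v-v(p(t),q(t))\\ v(p(t),q(t))-\bar v\end{bmatrix}.$$ Then for all $t\in\mathbb N$, $$\|\nabla D(\boldsymbol\lambda(t))-g(t)\|\le L\sqrt N\sum_{\tau=t-t_0}^{t-1}\|\boldsymbol\lambda(\tau)-\boldsymbol\lambda(\tau+1)\|,$$ where $t_0=d(\tau_{\max}+1)$ and $L=2(\|R\|^2+\|X\|^2)/a_{\min}$.
   Context: Network: a radial network is a tree on nodes $\{0,1,\dots,N\}$ rooted at node $0$; $\mathcal N=\{1,\dots,N\}$. Each $i\in\mathcal N$ has a unique parent $\sigma_i\in\{0,\dots,N\}$. Each edge $(h,k)$ ($h$ the parent of $k$) has resistance $r_{hk}\ge0$ and reactance $x_{hk}\ge0$. $\mathcal P_i$ is the set of edges on the path from $0$ to $i$. Define $N\times N$ matrices $R_{ij}=2\sum_{(h,k)\in\mathcal P_i\cap\mathcal P_j}r_{hk}$ and $X_{ij}=2\sum_{(h,k)\in\mathcal P_i\cap\mathcal P_j}x_{hk}$. $\texttt{dist}(i,j)$ is the number of edges on the tree path between $i$ and $j$, and $d=\max_{i,j\in\mathcal N}\texttt{dist}(i,j)$. Voltage model: $v(p,q)=Rp+Xq+v_0\mathbf 1\in\mathbb R^N$ for a fixed $v_0\in\mathbb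 R$. $\|\cdot\|$ is the Euclidean norm on vectors and the spectral norm on matrices. Problem (P): given vectors $\underline v\le\bar v$, $\underline p\le\bar p$, $\underline q\le\bar q$ in $\mathbb R^N$ and reals $a_i^{P},a_i^{Q}>0$, $b_i^P,b_i^Q,c_i^P,c_i^Q$, minimize over $p,q\in\mathbb R^N$ the cost $C^P(p)+C^Q(q)$, where $C^P(p)=\sum_{i}(\tfrac{a_i^P}{2}p_i^2+b_i^Pp_i+c_i^P)$, $C^Q(q)=\sum_{i}(\tfrac{a_i^Q}{2}q_i^2+b_i^Qq_i+c_i^Q)$, subject to $\underline v\le v(p,q)\le\bar v$, $\underline p\le p\le\bar p$, $\underline q\le q\le\bar q$. Let $a_{\min}=\min\{a_1^P,\dots,a_N^P,a_1^Q,\dots,a_N^Q\}$. The dual function is $D(\boldsymbol\lambda)=\min_{(p,q)\in[\underline p,\bar p]\times[\underline q,\bar q]}\bigl[C^P(p)+C^Q(q)+\underline\lambda^\top(\underline v-v(p,q))+\bar\lambda^\top(v(p,q)-\bar v)\bigr]$ for $\boldsymbol\lambda=(\underline\lambda,\bar\lambda)\in\mathbb R^{2N}$; it is differentiable. Algorithm DIST-OPT. For $i\in\mathcal N$, the algorithmic parent of $i$ is $\sigma_i$ if $\sigma_i\neq0$; if $\sigma_i=0$, $i$ has no algorithmic parent. Let $\mathcal C_i=\{j\in\mathcal N:\sigma_j=i\}$. For each $j\in\mathcal N$ having an algorithmic parent and each $t\in\mathbb N$, there are delays $\tau^{\uparrow}_j(t),\tau^{\downarrow}_j(t)\in\mathbb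 Z_{\ge0}$. Write $[x]_a^b=\min(\max(x,a),b)$ and $\lceil x\rceil_+=\max(x,0)$. Initialization ($t=0$): for all $i\in\mathcal N$, $z_i^P(0)=z_i^Q(0)=\underline\lambda_i(0)=\bar\lambda_i(0)=\lambda_i(0)=0$ and $\alpha_i(0)=\beta_i^P(0)=\beta_i^Q(0)=\hat\alpha_i(0)=\hat\beta_i^P(0)=\hat\beta_i^Q(0)=0$; any message $\alpha_i(s),\beta_i^P(s),\beta_i^Q(s)$ with $s<0$ is $0$; if $i$ has no algorithmic parent then $\hat\beta_i^P(t)=\hat\beta_i^Q(t)=0$ for all $t$. For $t=0,1,2,\dots$ and every $i\in\mathcal N$: (1) $p_i(t)=\bigl[(z_i^P(t)-b_i^P)/a_i^P\bigr]_{\underline p_i}^{\bar p_i}$ and $q_i(t)=\bigl[(z_i^Q(t)-b_i^Q)/a_i^Q\bigr]_{\underline q_i}^{\bar q_i}$. (2) $v(t)=v(p(t),q(t))$; $\underline\lambda_i(t+1)=\lceil\underline\lambda_i(t)+\gamma(\underline v_i-v_i(t))\rceil_+$, $\bar\lambda_i(t+1)=\lceil\bar\lambda_i(t)+\gamma(v_i(t)-\bar v_i)\rceil_+$, $\lambda_i(t+1)=\underline\lambda_i(t+1)-\bar\lambda_i(t+1)$, with step size $\gamma>0$. (3) $\alpha_i(t+1)=\lambda_i(t+1)+\sum_{j\in\mathcal C_i}\hat\alpha_j(t)$, and for each $j\in\mathcal C_i$: $\beta_j^P(t+1)=R_{ii}\bigl(\lambda_i(t+1)+\sum_{r\in\mathcal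 C_i\setminus\{j\}}\hat\alpha_r(t)\bigr)+\hat\beta_i^P(t)$ and $\beta_j^Q(t+1)=X_{ii}\bigl(\lambda_i(t+1)+\sum_{r\in\mathcal C_i\setminus\{j\}}\hat\alpha_r(t)\bigr)+\hat\beta_i^Q(t)$. For each $j$ with an algorithmic parent: $\hat\alpha_j(t+1)=\alpha_j(t+1-\tau^{\uparrow}_j(t))$, $\hat\beta_j^P(t+1)=\beta_j^P(t+1-\tau^{\downarrow}_j(t))$, $\hat\beta_j^Q(t+1)=\beta_j^Q(t+1-\tau^{\downarrow}_j(t))$. (4) $z_i^P(t+1)=R_{ii}\bigl(\lambda_i(t+1)+\sum_{j\in\mathcal C_i}\hat\alpha_j(t+1)\bigr)+\hat\beta_i^P(t+1)$ and $z_i^Q(t+1)=X_{ii}\bigl(\lambda_i(t+1)+\sum_{j\in\mathcal C_i}\hat\alpha_j(t+1)\bigr)+\hat\beta_i^Q(t+1)$. *)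

theory Defs
  imports "HOL-Analysis.Analysis"
begin

text \<open>Nodes 1..N are the elements of a finite type 'n; the root node 0
  is represented by None. par i = Some j means sigma_i = j, par i = None means sigma_i = 0.
  The edge (sigma_k, k) is identified with its child endpoint k.\<close>

fun parpow :: "('n \<Rightarrow> 'n option) \<Rightarrow> nat \<Rightarrow> 'n \<Rightarrow> 'n option" where
  "parpow par 0 i = Some i"
| "parpow par (Suc k) i = Option.bind (parpow par k i) par"

definition is_radial :: "('n \<Rightarrow> 'n option) \<Rightarrow> bool" where
  "is_radial par \<longleftrightarrow> (\<forall>i. \<exists>k. parpow par k i = None)"

definition path_edges :: "('n \<Rightarrow> 'n option) \<Rightarrow> 'n \<Rightarrow> 'n set" where
  "path_edges par i = {k. \<exists>m. parpow par m i = Some k}"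

definition children :: "('n \<Rightarrow> 'n option) \<Rightarrow> 'n \<Rightarrow> 'n set" where
  "children par i = {j. par j = Some i}"

definition path_matrix :: "('n::finite \<Rightarrow> 'n option) \<Rightarrow> ('n \<Rightarrow> real) \<Rightarrow> real^'n^'n" where
  "path_matrix par r = (\<chi> i j. 2 * (\<Sum>k\<in>path_edges par i \<inter> path_edges par j. r k))"

text \<open>Number of edges on the tree path between i and j: edges on exactly one of the root paths.\<close>
definition tree_dist :: "('n \<Rightarrow> 'n option) \<Rightarrow> 'n \<Rightarrow> 'n \<Rightarrow> nat" where
  "tree_dist par i j = card (path_edges par i - path_edges par j) + card (path_edges par j - path_edges par i)"

definition diam :: "('n::finite \<Rightarrow> 'n option) \<Rightarrow> nat" where
  "diam par = Max {tree_dist par i j | i j. True}"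

definition spec_norm :: "real^'n^'n \<Rightarrow> real" where
  "spec_norm M = onorm (\<lambda>v. M *v v)"

definition voltage :: "real^'n^'n \<Rightarrow> real^'n^'n \<Rightarrow> real \<Rightarrow> real^'n \<Rightarrow> real^'n \<Rightarrow> real^'n" where
  "voltage R X v0 p q = R *v p + X *v q + (\<chi> i. v0)"

definition clamp :: "real \<Rightarrow> real \<Rightarrow> real \<Rightarrow> real" where
  "clamp x a b = min (max x a) b"

definition quad_cost :: "real^'n \<Rightarrow> real^'n \<Rightarrow> real^'n \<Rightarrow> real^'n \<Rightarrow> real" where
  "quad_cost a b c p = (\<Sum>i\<in>UNIV. a$i / 2 * (p$i)^2 + b$i * p$i + c$i)"

definition vbox :: "real^'n \<Rightarrow> real^'n \<Rightarrow> (real^'n) set" where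
  "vbox lo hi = {p. \<forall>i. lo$i \<le> p$i \<and> p$i \<le> hi$i}"

definition dual_fun ::
  "real^'n^'n \<Rightarrow> real^'n^'n \<Rightarrow> real \<Rightarrow> real^'n \<Rightarrow> real^'n \<Rightarrow> real^'n \<Rightarrow> real^'n \<Rightarrow> real^'n \<Rightarrow> real^'n
   \<Rightarrow> real^'n \<Rightarrow> real^'n \<Rightarrow> real^'n \<Rightarrow> real^'n \<Rightarrow> real^'n \<Rightarrow> real^'n \<Rightarrow> (real^'n) \<times> (real^'n) \<Rightarrow> real" where
  "dual_fun R X v0 vlo vhi plo phi qlo qhi aP bP cP aQ bQ cQ lam =
     Inf {quad_cost aP bP cP p + quad_cost aQ bQ cQ q
          + inner (fst lam) (vlo - voltage R X v0 p q) + inner (snd lam) (voltage R X v0 p q - vhi)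
          | p q. p \<in> vbox plo phi \<and> q \<in> vbox qlo qhi}"

definition has_gradient :: "('a::real_inner \<Rightarrow> real) \<Rightarrow> 'a \<Rightarrow> 'a \<Rightarrow> bool" where
  "has_gradient f G x \<longleftrightarrow> (f has_derivative (\<lambda>h. inner G h)) (at x)"

end

theory Submission
  imports Defs
begin



lemma parpow_Suc2: "parpow par (Suc k) i = Option.bind (par i) (parpow par k)"
proof (induction k arbitrary: i)
  case 0 then show ?case by (cases "par i") auto
next
  case (Suc k) then show ?case by (cases "par i") auto
qed

lemma parpow_add: "parpow par m i = Some c \<Longrightarrow> parpow par (m + l) i = parpow par l c"
  by (induction l) auto

lemma parpow_None: "parpow par m i = None \<Longrightarrow> parpow par (m + l) i = None"
  by (induction l) auto

locale rtree =
  fixes par :: "'n::finite \<Rightarrow> 'n option"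
  assumes radial: "is_radial par"
begin

abbreviation P where "P \<equiv> path_edges par"
definition sub where "sub i = {k. i \<in> P k}"
abbreviation C where "C \<equiv> children par"

lemma P_self: "i \<in> P i"
  unfolding path_edges_def by (auto intro: exI[of _ 0])

lemma P_Some: "par j = Some i \<Longrightarrow> P j = insert j (P i)"
  unfolding path_edges_def
proof safe
  fix x m assume "par j = Some i" "parpow par m j = Some x" "x \<noteq> j"
  then show "\<exists>m. parpow par m i = Some x"
    by (cases m) (auto simp: parpow_Suc2 simp del: parpow.simps(2))
next
  show "\<exists>m. parpow par m j = Some j" by (auto intro: exI[of _ 0])
next
  fix x m assume "par j = Some i" "parpow par m i = Some x"
  then show "\<exists>m. parpow par m j = Some x"
    by (auto simp: parpow_Suc2 simp del: parpow.simps(2) intro!: exI[of _ "Suc m"])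
qed

lemma P_None: "par j = None \<Longrightarrow> P j = {j}"
  unfolding path_edges_def
proof safe
  fix x m assume "par j = None" "parpow par m j = Some x"
  then show "x = j" by (cases m) (auto simp: parpow_Suc2 simp del: parpow.simps(2))
qed (auto intro: exI[of _ 0])

lemma acyclic: assumes "par j = Some i" shows "j \<notin> P i"
proof
  assume "j \<in> P i"
  then obtain m where m: "parpow par m i = Some j" unfolding path_edges_def by auto
  have cyc: "parpow par (Suc m) j = Some j" using assms m by (simp add: parpow_Suc2 del: parpow.simps(2))
  have all: "parpow par (n * Suc m) j = Some j" for n
  proof (induction n)
    case (Suc n)
    have "parpow par (Suc n * Suc m) j = parpow par (n * Suc m + Suc m) j" by (metis mult_Suc add.commute)
    also have "\<dots> = parpow par (Suc m) j" using parpow_add[OF Suc.IH] by simp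
    finally show ?case using cyc by simp
  qed simp
  obtain K where K: "parpow par K j = None" using radial unfolding is_radial_def by auto
  have "parpow par (K + (K * Suc m - K)) j = None" by (rule parpow_None[OF K])
  moreover have "K + (K * Suc m - K) = K * Suc m" by simp
  ultimately show False using all[of K] by simp
qed

lemma P_mono: "c \<in> P k \<Longrightarrow> P c \<subseteq> P k"
  unfolding path_edges_def
proof safe
  fix m x l assume "parpow par m k = Some c" "parpow par l c = Some x"
  then show "\<exists>m. parpow par m k = Some x" using parpow_add by metis
qed

lemma child_unique:
  assumes "par c1 = Some i" "par c2 = Some i" "c1 \<in> P k" "c2 \<in> P k"
  shows "c1 = c2"
proof -
  have main: "c1 = c2" if h: "par c1 = Some i" "par c2 = Some i"
     "parpow par m1 k = Some c1" "parpow par m2 k = Some c2" "m1 \<le> m2" for c1 c2 m1 m2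
  proof -
    have e: "parpow par m2 k = parpow par (m2 - m1) c1"
      using parpow_add[OF h(3), of "m2 - m1"] h(5) by simp
    show ?thesis
    proof (cases "m2 - m1")
      case 0 then show ?thesis using h e by simp
    next
      case (Suc n)
      then have "parpow par n i = Some c2" using h e by (simp add: parpow_Suc2 del: parpow.simps(2))
      then have "c2 \<in> P i" unfolding path_edges_def by auto
      then show ?thesis using acyclic[OF h(2)] by simp
    qed
  qed
  obtain m1 m2 where "parpow par m1 k = Some c1" "parpow par m2 k = Some c2"
    using assms unfolding path_edges_def by auto
  then show ?thesis using main assms by (metis nle_le)
qed

lemma child_exists:
  assumes "i \<in> P k" "k \<noteq> i" shows "\<exists>c. par c = Some i \<and> c \<in> P k"
proof -
  obtain m where m: "parpow par m k = Some i" using assms unfolding path_edges_def by auto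
  then obtain n where n: "m = Suc n" using assms by (cases m) auto
  then obtain c where "parpow par n k = Some c" "par c = Some i" using m by (cases "parpow par n k") auto
  then show ?thesis unfolding path_edges_def by auto
qed

definition ct where "ct i k = (THE c. par c = Some i \<and> c \<in> P k)"

lemma ct_eq: "par c = Some i \<Longrightarrow> c \<in> P k \<Longrightarrow> ct i k = c"
  unfolding ct_def by (rule the_equality) (auto intro: child_unique)

lemma sub_decomp: "sub i = insert i (\<Union>c\<in>C i. sub c)"
proof safe
  fix k assume "k \<in> sub i" "k \<notin> (\<Union>c\<in>C i. sub c)"
  then show "k = i" using child_exists unfolding sub_def children_def by blast
next
  show "i \<in> sub i" unfolding sub_def by (simp add: P_self)
next
  fix k c assume "c \<in> C i" "k \<in> sub c"
  then show "k \<in> sub i" using P_mono P_Some[of c i] P_self[of i] unfolding sub_def children_def by auto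
qed

lemma sub_child_sub: "c \<in> C i \<Longrightarrow> sub c \<subseteq> sub i"
  using sub_decomp by blast

lemma not_in_sub_child: "c \<in> C i \<Longrightarrow> i \<notin> sub c"
  using acyclic unfolding sub_def children_def by auto

lemma sub_disj: "c1 \<in> C i \<Longrightarrow> c2 \<in> C i \<Longrightarrow> c1 \<noteq> c2 \<Longrightarrow> sub c1 \<inter> sub c2 = {}"
  using child_unique unfolding sub_def children_def by blast

lemma sum_Union_children:
  assumes "C' \<subseteq> C i"
  shows "(\<Sum>k\<in>(\<Union>c\<in>C'. sub c). f k) = (\<Sum>c\<in>C'. \<Sum>k\<in>sub c. f k)"
  apply (rule sum.UNION_disjoint)
  using assms sub_disj[of _ i] by auto

lemma sum_sub: "(\<Sum>k\<in>sub i. f k) = f i + (\<Sum>c\<in>C i. \<Sum>k\<in>sub c. f k)"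
proof -
  have "i \<notin> (\<Union>c\<in>C i. sub c)" using not_in_sub_child by blast
  then show ?thesis by (subst sub_decomp) (simp add: sum_Union_children[OF order_refl])
qed

lemma sum_three:
  assumes "C' \<subseteq> C i"
  shows "(\<Sum>k\<in>insert i (\<Union>c\<in>C'. sub c) \<union> - sub i. f k)
     = f i + (\<Sum>c\<in>C'. \<Sum>k\<in>sub c. f k) + (\<Sum>k\<in>- sub i. f k)"
proof -
  have A: "insert i (\<Union>c\<in>C'. sub c) \<subseteq> sub i" using assms sub_decomp by blast
  have "i \<notin> (\<Union>c\<in>C'. sub c)" using not_in_sub_child assms by blast
  moreover have "(\<Sum>k\<in>insert i (\<Union>c\<in>C'. sub c) \<union> - sub i. f k)
     = (\<Sum>k\<in>insert i (\<Union>c\<in>C'. sub c). f k) + (\<Sum>k\<in>- sub i. f k)"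
    by (rule sum.union_disjoint) (use A in auto)
  ultimately show ?thesis by (simp add: sum_Union_children[OF assms])
qed

lemma M_entry: "path_matrix par w $ a $ b = 2 * sum w (P a \<inter> P b)"
  unfolding path_matrix_def by simp

lemma M_sym: "path_matrix par w $ a $ b = path_matrix par w $ b $ a"
  unfolding M_entry by (simp add: Int_commute)

lemma M_sub: "k \<in> sub i \<Longrightarrow> path_matrix par w $ i $ k = path_matrix par w $ i $ i"
  unfolding M_entry sub_def using P_mono by (simp add: Int_absorb2)

lemma M_child_out: "par j = Some i \<Longrightarrow> k \<notin> sub j \<Longrightarrow> path_matrix par w $ j $ k = path_matrix par w $ i $ k"
  unfolding M_entry sub_def using P_Some[of j i] by simp

lemma M_nonneg: "(\<And>k. w k \<ge> 0) \<Longrightarrow> path_matrix par w $ a $ b \<ge> 0"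
  unfolding M_entry by (simp add: sum_nonneg)

lemma D1: assumes "c \<in> C i" "k \<in> sub c"
  shows "card (P k - P i) = card (P k - P c) + 1"
proof -
  have pc: "par c = Some i" using assms unfolding children_def by simp
  have "P k - P i = insert c (P k - P c)"
    using assms P_Some[OF pc] acyclic[OF pc] unfolding sub_def by auto
  moreover have "c \<notin> P k - P c" using P_self by auto
  ultimately show ?thesis by simp
qed

lemma D2: "k \<in> sub i \<Longrightarrow> tree_dist par i k = card (P k - P i)"
  unfolding tree_dist_def sub_def using P_mono[of i k] by simp

lemma D3: assumes "par j = Some i" "k \<notin> sub i"
  shows "tree_dist par j k = tree_dist par i k + 1"
proof -
  have jk: "j \<notin> P k" using assms P_mono[of j k] P_Some[of j i] P_self[of i] unfolding sub_def by auto
  have "P j - P k = insert j (P i - P k)" using P_Some[OF assms(1)] jk by auto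
  moreover have "j \<notin> P i - P k" using acyclic[OF assms(1)] by simp
  moreover have "P k - P j = P k - P i" using P_Some[OF assms(1)] jk by auto
  ultimately show ?thesis unfolding tree_dist_def by simp
qed

lemma D4: "k \<notin> sub j \<Longrightarrow> tree_dist par j k \<ge> 1"
proof -
  assume "k \<notin> sub j"
  then have "j \<in> P j - P k" using P_self unfolding sub_def by auto
  then have "card (P j - P k) > 0" by (simp add: card_gt_0_iff) blast
  then show ?thesis unfolding tree_dist_def by simp
qed

lemma D5: assumes "par j = Some i" "c \<in> C i" "c \<noteq> j" "k \<in> sub c"
  shows "tree_dist par j k = card (P k - P c) + 2"
proof -
  have pc: "par c = Some i" using assms unfolding children_def by simp
  have jC: "j \<in> C i" using assms unfolding children_def by simp
  have ki: "k \<in> sub i" using sub_child_sub assms by blast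
  have jk: "j \<notin> P k" using sub_disj[OF assms(2) jC assms(3)] assms(4) unfolding sub_def by auto
  have "P j - P k = {j}" using P_Some[OF assms(1)] jk ki P_mono[of i k] unfolding sub_def by auto
  moreover have "P k - P j = P k - P i" using P_Some[OF assms(1)] jk by auto
  ultimately show ?thesis unfolding tree_dist_def using D1[OF assms(2,4)] by simp
qed

lemma D6: "par j = Some i \<Longrightarrow> tree_dist par j i = 1"
proof -
  assume a: "par j = Some i"
  have "P j - P i = {j}" using P_Some[OF a] acyclic[OF a] by auto
  moreover have "P i - P j = {}" using P_Some[OF a] by auto
  ultimately show ?thesis unfolding tree_dist_def by simp
qed

lemma D7: "tree_dist par a b \<le> diam par"
  unfolding diam_def
proof (rule Max_ge)
  have "{tree_dist par i j |i j. True} = (\<lambda>(i,j). tree_dist par i j) ` UNIV" by auto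
  then show "finite {tree_dist par i j |i j. True}" by simp
qed auto

lemma tree_dist_self: "tree_dist par i i = 0"
  unfolding tree_dist_def by simp

end



lemma aux_nn: "- int a \<le> int c * (int a + 1)"
  by (smt (verit) mult_nonneg_nonneg of_nat_0_le_iff)

locale alg = rtree par for par :: "'n::finite \<Rightarrow> 'n option" +
  fixes lam :: "nat \<Rightarrow> 'n \<Rightarrow> real" and alpha ahat :: "nat \<Rightarrow> real^'n"
    and tau_up :: "'n \<Rightarrow> nat \<Rightarrow> nat" and tm :: nat
  assumes lam0: "\<And>k. lam 0 k = 0" and alpha0: "alpha 0 = 0" and ahat0: "ahat 0 = 0"
    and step_alpha: "\<And>s i. alpha (Suc s) $ i = lam (Suc s) i + (\<Sum>j\<in>C i. ahat s $ j)"
    and step_ahat: "\<And>s j. par j \<noteq> None \<Longrightarrow>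
       ahat (Suc s) $ j = (if tau_up j s \<le> Suc s then alpha (Suc s - tau_up j s) $ j else 0)"
    and delay_up: "\<And>j s. tau_up j s \<le> tm"
begin

definition lamI :: "int \<Rightarrow> 'n \<Rightarrow> real" where
  "lamI s k = (if s < 0 then 0 else lam (nat s) k)"

lemma lamI_0[simp]: "lamI 0 k = 0" by (simp add: lamI_def lam0)
lemma lamI_nat[simp]: "lamI (int n) k = lam n k" by (simp add: lamI_def)

definition Arep where "Arep v s j \<longleftrightarrow> (\<exists>\<sigma>. v = (\<Sum>k\<in>sub j. lamI (\<sigma> k) k) \<and>
   (\<forall>k\<in>sub j. \<sigma> k \<le> int s \<and> int s - int (card (P k - P j)) * (int tm + 1) \<le> \<sigma> k))"
definition Hrep where "Hrep v s j \<longleftrightarrow> (\<exists>\<sigma>. v = (\<Sum>k\<in>sub j. lamI (\<sigma> k) k) \<and>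
   (\<forall>k\<in>sub j. \<sigma> k \<le> int s \<and> int s - int tm - int (card (P k - P j)) * (int tm + 1) \<le> \<sigma> k))"

lemma rep_ah: "(\<forall>j. Arep (alpha s $ j) s j) \<and> (\<forall>j. par j \<noteq> None \<longrightarrow> Hrep (ahat s $ j) s j)"
proof (induction s rule: less_induct)
  case (less s)
  have A: "Arep (alpha s $ j) s j" for j
  proof (cases s)
    case 0
    then show ?thesis unfolding Arep_def by (auto simp: alpha0 intro!: exI[of _ "\<lambda>_. 0"])
  next
    case (Suc s')
    have "\<forall>c. \<exists>\<sigma>. par c \<noteq> None \<longrightarrow> (ahat s' $ c = (\<Sum>k\<in>sub c. lamI (\<sigma> k) k) \<and>
   (\<forall>k\<in>sub c. \<sigma> k \<le> int s' \<and> int s' - int tm - int (card (P k - P c)) * (int tm + 1) \<le> \<sigma> k))"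
    proof -
      have "\<forall>c. par c \<noteq> None \<longrightarrow> Hrep (ahat s' $ c) s' c" using less.IH[of s'] Suc by simp
      then show ?thesis unfolding Hrep_def by blast
    qed
    then have "\<exists>F. \<forall>c. par c \<noteq> None \<longrightarrow> ahat s' $ c = (\<Sum>k\<in>sub c. lamI (F c k) k) \<and>
   (\<forall>k\<in>sub c. F c k \<le> int s' \<and> int s' - int tm - int (card (P k - P c)) * (int tm + 1) \<le> F c k)"
      by (rule choice)
    then obtain F where F0: "\<forall>c. par c \<noteq> None \<longrightarrow> ahat s' $ c = (\<Sum>k\<in>sub c. lamI (F c k) k) \<and>
   (\<forall>k\<in>sub c. F c k \<le> int s' \<and> int s' - int tm - int (card (P k - P c)) * (int tm + 1) \<le> F c k)"
      by blast
    note F = F0[rule_format]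
    define \<sigma> where "\<sigma> k = (if k = j then int s else F (ct j k) k)" for k
    have cc: "ct j k = c" if "c \<in> C j" "k \<in> sub c" for c k
      using that ct_eq unfolding children_def sub_def by auto
    have kj: "k \<noteq> j" if "c \<in> C j" "k \<in> sub c" for c k
      using that not_in_sub_child by blast
    have "alpha s $ j = lam s j + (\<Sum>c\<in>C j. ahat s' $ c)" using step_alpha Suc by simp
    also have "\<dots> = lamI (\<sigma> j) j + (\<Sum>c\<in>C j. \<Sum>k\<in>sub c. lamI (\<sigma> k) k)"
    proof -
      have "ahat s' $ c = (\<Sum>k\<in>sub c. lamI (\<sigma> k) k)" if "c \<in> C j" for c
      proof -
        have "par c \<noteq> None" using that unfolding children_def by auto
        then have "ahat s' $ c = (\<Sum>k\<in>sub c. lamI (F c k) k)" using F by blast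
        also have "\<dots> = (\<Sum>k\<in>sub c. lamI (\<sigma> k) k)"
          by (rule sum.cong) (use that cc kj in \<open>auto simp: \<sigma>_def\<close>)
        finally show ?thesis .
      qed
      then have "(\<Sum>c\<in>C j. ahat s' $ c) = (\<Sum>c\<in>C j. \<Sum>k\<in>sub c. lamI (\<sigma> k) k)"
        by (intro sum.cong) auto
      moreover have "lamI (\<sigma> j) j = lam s j" by (simp add: \<sigma>_def)
      ultimately show ?thesis by simp
    qed
    also have "\<dots> = (\<Sum>k\<in>sub j. lamI (\<sigma> k) k)" by (rule sum_sub[symmetric])
    finally have val: "alpha s $ j = (\<Sum>k\<in>sub j. lamI (\<sigma> k) k)" .
    have bnd: "\<sigma> k \<le> int s \<and> int s - int (card (P k - P j)) * (int tm + 1) \<le> \<sigma> k" if kin: "k \<in> sub j" for k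
    proof (cases "k = j")
      case True then show ?thesis by (simp add: \<sigma>_def)
    next
      case False
      then obtain c where c: "par c = Some j" "c \<in> P k"
        using child_exists[of j k] kin unfolding sub_def by blast
      then have cC: "c \<in> C j" and kc: "k \<in> sub c" unfolding children_def sub_def by auto
      have "\<sigma> k = F c k" using False cc[OF cC kc] by (simp add: \<sigma>_def)
      moreover have "F c k \<le> int s' \<and> int s' - int tm - int (card (P k - P c)) * (int tm + 1) \<le> F c k"
        using F[of c] c kc by auto
      moreover have "card (P k - P j) = card (P k - P c) + 1" using D1[OF cC kc] .
      ultimately show ?thesis using Suc by (simp add: algebra_simps)
    qed
    show ?thesis unfolding Arep_def using val bnd by blast
  qed
  have H: "Hrep (ahat s $ j) s j" if pj: "par j \<noteq> None" for j
  proof (cases s)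
    case 0
    have "\<forall>k\<in>sub j. (0::int) \<le> int s \<and> int s - int tm - int (card (P k - P j)) * (int tm + 1) \<le> 0"
    proof
      fix k
      have "int (card (P k - P j)) * (int tm + 1) \<ge> 0" by simp
      then show "(0::int) \<le> int s \<and> int s - int tm - int (card (P k - P j)) * (int tm + 1) \<le> 0"
        using 0 by linarith
    qed
    then show ?thesis unfolding Hrep_def using 0 by (intro exI[of _ "\<lambda>_. 0"]) (simp add: ahat0)
  next
    case (Suc s')
    show ?thesis
    proof (cases "tau_up j s' \<le> Suc s'")
      case True
      define m where "m = s - tau_up j s'"
      have am: "ahat s $ j = alpha m $ j" using step_ahat[OF pj] True Suc by (simp add: m_def)
      have "Arep (alpha m $ j) m j"
      proof (cases "m < s")
        case True then show ?thesis using less.IH[of m] by blast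
      next
        case False then have "m = s" by (simp add: m_def)
        then show ?thesis using A by simp
      qed
      then obtain \<sigma> where \<sigma>: "alpha m $ j = (\<Sum>k\<in>sub j. lamI (\<sigma> k) k)"
        "\<forall>k\<in>sub j. \<sigma> k \<le> int m \<and> int m - int (card (P k - P j)) * (int tm + 1) \<le> \<sigma> k"
        unfolding Arep_def by blast
      have ms: "int m \<ge> int s - int tm" "m \<le> s" using delay_up[of j s'] True Suc by (auto simp: m_def)
      have "\<forall>k\<in>sub j. \<sigma> k \<le> int s \<and> int s - int tm - int (card (P k - P j)) * (int tm + 1) \<le> \<sigma> k"
      proof
        fix k assume "k \<in> sub j"
        with \<sigma>(2) have "\<sigma> k \<le> int m" "int m - int (card (P k - P j)) * (int tm + 1) \<le> \<sigma> k" by auto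
        then show "\<sigma> k \<le> int s \<and> int s - int tm - int (card (P k - P j)) * (int tm + 1) \<le> \<sigma> k"
          using ms by linarith
      qed
      then show ?thesis unfolding Hrep_def using am \<sigma>(1) by (intro exI[of _ \<sigma>]) simp
    next
      case False
      then have lt: "int s < int tm" using delay_up[of j s'] Suc by simp
      have z: "ahat s $ j = 0" using step_ahat[OF pj] False Suc by simp
      have "\<forall>k\<in>sub j. (0::int) \<le> int s \<and> int s - int tm - int (card (P k - P j)) * (int tm + 1) \<le> 0"
      proof
        fix k
        have "int (card (P k - P j)) * (int tm + 1) \<ge> 0" by simp
        then show "(0::int) \<le> int s \<and> int s - int tm - int (card (P k - P j)) * (int tm + 1) \<le> 0"
          using lt by linarith
      qed
      then show ?thesis unfolding Hrep_def using z
        by (intro exI[of _ "\<lambda>_. 0"]) simp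
    qed
  qed
  show ?case using A H by blast
qed

end



lemma aux2: "1 \<le> d \<Longrightarrow> (0::int) \<le> a \<Longrightarrow> a + 1 \<le> int d * (a + 1)"
proof -
  assume "1 \<le> d" "0 \<le> a"
  then have "0 \<le> (int d - 1) * (a + 1)" by simp
  then show ?thesis by (simp add: algebra_simps)
qed

context rtree begin
lemma ct_in: "k \<in> sub i \<Longrightarrow> k \<noteq> i \<Longrightarrow> ct i k \<in> C i \<and> k \<in> sub (ct i k)"
proof -
  assume "k \<in> sub i" "k \<noteq> i"
  then obtain c where "par c = Some i" "c \<in> P k" using child_exists unfolding sub_def by blast
  then show ?thesis using ct_eq unfolding children_def sub_def by auto
qed
lemma ct_c: "c \<in> C i \<Longrightarrow> k \<in> sub c \<Longrightarrow> ct i k = c"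
  using ct_eq unfolding children_def sub_def by auto
lemma set_B: assumes pj: "par j = Some i"
  shows "- sub j = insert i (\<Union>c\<in>C i - {j}. sub c) \<union> - sub i"
proof -
  have jC: "j \<in> C i" using pj unfolding children_def by simp
  have 1: "i \<notin> sub j" using not_in_sub_child[OF jC] .
  have 2: "\<forall>c\<in>C i - {j}. sub c \<inter> sub j = {}" using sub_disj[OF _ jC] by blast
  have 3: "sub j \<subseteq> sub i" using sub_child_sub[OF jC] .
  have 4: "sub i = insert i (\<Union>c\<in>C i. sub c)" by (rule sub_decomp)
  show ?thesis
  proof (rule set_eqI)
    fix k
    show "k \<in> - sub j \<longleftrightarrow> k \<in> insert i (\<Union>c\<in>C i - {j}. sub c) \<union> - sub i"
      using 1 2 3 4 jC by blast
  qed
qed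

lemma set_Z: "insert i (\<Union>c\<in>C i. sub c) \<union> - sub i = UNIV"
  using sub_decomp[of i] by blast

lemma M_root: "par j = None \<Longrightarrow> k \<notin> sub j \<Longrightarrow> path_matrix par w $ j $ k = 0"
  unfolding M_entry sub_def using P_None by simp
end

locale chan = alg par lam alpha ahat tau_up tm for par :: "'n::finite \<Rightarrow> 'n option" and lam alpha ahat tau_up tm +
  fixes w :: "'n \<Rightarrow> real" and bet bh z :: "nat \<Rightarrow> real^'n" and tau_down :: "'n \<Rightarrow> nat \<Rightarrow> nat"
  assumes bet0: "bet 0 = 0" and bh0: "bh 0 = 0" and z0: "z 0 = 0"
    and root_bh: "\<And>i s. par i = None \<Longrightarrow> bh s $ i = 0"
    and step_bet: "\<And>s i j. par j = Some i \<Longrightarrow>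
       bet (Suc s) $ j = path_matrix par w $ i $ i * (lam (Suc s) i + (\<Sum>k\<in>C i - {j}. ahat s $ k)) + bh s $ i"
    and step_bh: "\<And>s j. par j \<noteq> None \<Longrightarrow>
       bh (Suc s) $ j = (if tau_down j s \<le> Suc s then bet (Suc s - tau_down j s) $ j else 0)"
    and step_z: "\<And>s i. z (Suc s) $ i = path_matrix par w $ i $ i * (lam (Suc s) i + (\<Sum>j\<in>C i. ahat (Suc s) $ j)) + bh (Suc s) $ i"
    and delay_down: "\<And>j s. tau_down j s \<le> tm"
begin

abbreviation M where "M \<equiv> path_matrix par w"

definition Brep where "Brep v s j \<longleftrightarrow> (\<exists>\<sigma>. v = (\<Sum>k\<in>- sub j. M $ j $ k * lamI (\<sigma> k) k) \<and>
   (\<forall>k\<in>- sub j. \<sigma> k \<le> int s \<and> int s + (int tm + 1) - int (tree_dist par j k) * (int tm + 1) \<le> \<sigma> k))"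
definition BHrep where "BHrep v s j \<longleftrightarrow> (\<exists>\<sigma>. v = (\<Sum>k\<in>- sub j. M $ j $ k * lamI (\<sigma> k) k) \<and>
   (\<forall>k\<in>- sub j. \<sigma> k \<le> int s \<and> int s + 1 - int (tree_dist par j k) * (int tm + 1) \<le> \<sigma> k))"
definition Zrep where "Zrep v s i \<longleftrightarrow> (\<exists>\<sigma>. v = (\<Sum>k\<in>UNIV. M $ i $ k * lamI (\<sigma> k) k) \<and>
   (\<forall>k. \<sigma> k \<le> int s \<and> int s - int (tree_dist par i k) * (int tm + 1) \<le> \<sigma> k))"

lemma dist_ge: "k \<notin> sub j \<Longrightarrow> int tm + 1 \<le> int (tree_dist par j k) * (int tm + 1)"
  by (rule aux2[OF D4]) simp_all

lemma H_choice: assumes "\<forall>c. par c \<noteq> None \<longrightarrow> Hrep (ahat s $ c) s c"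
  obtains F where "\<And>c. par c \<noteq> None \<Longrightarrow> ahat s $ c = (\<Sum>k\<in>sub c. lamI (F c k) k) \<and>
   (\<forall>k\<in>sub c. F c k \<le> int s \<and> int s - int tm - int (card (P k - P c)) * (int tm + 1) \<le> F c k)"
proof -
  have "\<forall>c. \<exists>\<sigma>. par c \<noteq> None \<longrightarrow> (ahat s $ c = (\<Sum>k\<in>sub c. lamI (\<sigma> k) k) \<and>
   (\<forall>k\<in>sub c. \<sigma> k \<le> int s \<and> int s - int tm - int (card (P k - P c)) * (int tm + 1) \<le> \<sigma> k))"
    using assms unfolding Hrep_def by blast
  then have "\<exists>F. \<forall>c. par c \<noteq> None \<longrightarrow> (ahat s $ c = (\<Sum>k\<in>sub c. lamI (F c k) k) \<and>
   (\<forall>k\<in>sub c. F c k \<le> int s \<and> int s - int tm - int (card (P k - P c)) * (int tm + 1) \<le> F c k))"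
    by (rule choice)
  then obtain F where "\<forall>c. par c \<noteq> None \<longrightarrow> (ahat s $ c = (\<Sum>k\<in>sub c. lamI (F c k) k) \<and>
   (\<forall>k\<in>sub c. F c k \<le> int s \<and> int s - int tm - int (card (P k - P c)) * (int tm + 1) \<le> F c k))"
    by blast
  then show ?thesis using that by blast
qed

lemma combine:
  assumes C': "C' \<subseteq> C i"
    and F: "\<And>c. c \<in> C' \<Longrightarrow> ahat s' $ c = (\<Sum>k\<in>sub c. lamI (F c k) k)"
    and O: "v = (\<Sum>k\<in>- sub i. M $ i $ k * lamI (\<sigma>o k) k)"
    and sig: "\<sigma> = (\<lambda>k. if k = i then int s else if k \<in> sub i then F (ct i k) k else \<sigma>o k)"
    and coef: "\<And>k. k \<in> insert i (\<Union>c\<in>C'. sub c) \<union> - sub i \<Longrightarrow> f k = M $ i $ k"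
  shows "M $ i $ i * (lam s i + (\<Sum>c\<in>C'. ahat s' $ c)) + v
     = (\<Sum>k\<in>insert i (\<Union>c\<in>C'. sub c) \<union> - sub i. f k * lamI (\<sigma> k) k)"
proof -
  have cs: "c \<in> C i" if "c \<in> C'" for c using that C' by blast
  have s1: "ahat s' $ c = (\<Sum>k\<in>sub c. lamI (\<sigma> k) k)" if "c \<in> C'" for c
  proof -
    have "(\<Sum>k\<in>sub c. lamI (F c k) k) = (\<Sum>k\<in>sub c. lamI (\<sigma> k) k)"
    proof (rule sum.cong)
      fix k assume k: "k \<in> sub c"
      have "k \<noteq> i" using not_in_sub_child[OF cs[OF that]] k by blast
      moreover have "k \<in> sub i" using sub_child_sub[OF cs[OF that]] k by blast
      ultimately show "lamI (F c k) k = lamI (\<sigma> k) k" using ct_c[OF cs[OF that] k] sig by simp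
    qed simp
    then show ?thesis using F[OF that] by simp
  qed
  have s2: "(\<Sum>k\<in>sub c. M $ i $ i * lamI (\<sigma> k) k) = (\<Sum>k\<in>sub c. f k * lamI (\<sigma> k) k)" if "c \<in> C'" for c
  proof (rule sum.cong)
    fix k assume k: "k \<in> sub c"
    have "k \<in> sub i" using sub_child_sub[OF cs[OF that]] k by blast
    moreover have "f k = M $ i $ k" using coef that k by blast
    ultimately show "M $ i $ i * lamI (\<sigma> k) k = f k * lamI (\<sigma> k) k" using M_sub by simp
  qed simp
  have s3: "v = (\<Sum>k\<in>- sub i. f k * lamI (\<sigma> k) k)"
    unfolding O by (rule sum.cong) (use coef sig sub_def P_self in auto)
  have "M $ i $ i * (lam s i + (\<Sum>c\<in>C'. ahat s' $ c)) + v
     = f i * lamI (\<sigma> i) i + (\<Sum>c\<in>C'. \<Sum>k\<in>sub c. f k * lamI (\<sigma> k) k) + (\<Sum>k\<in>- sub i. f k * lamI (\<sigma> k) k)"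
  proof -
    have "(\<Sum>c\<in>C'. ahat s' $ c) = (\<Sum>c\<in>C'. \<Sum>k\<in>sub c. lamI (\<sigma> k) k)"
      by (rule sum.cong) (simp_all add: s1)
    then have "M $ i $ i * (\<Sum>c\<in>C'. ahat s' $ c) = (\<Sum>c\<in>C'. \<Sum>k\<in>sub c. f k * lamI (\<sigma> k) k)"
      by (simp add: sum_distrib_left s2)
    moreover have "f i = M $ i $ i" using coef by blast
    moreover have "lamI (\<sigma> i) i = lam s i" using sig by simp
    ultimately show ?thesis using s3 by (simp add: algebra_simps)
  qed
  also have "\<dots> = (\<Sum>k\<in>insert i (\<Union>c\<in>C'. sub c) \<union> - sub i. f k * lamI (\<sigma> k) k)"
    by (rule sum_three[OF C', symmetric])
  finally show ?thesis .
qed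


lemma rep_b: "(\<forall>j i. par j = Some i \<longrightarrow> Brep (bet s $ j) s j) \<and> (\<forall>j. BHrep (bh s $ j) s j)"
proof (induction s rule: less_induct)
  case (less s)
  have B: "Brep (bet s $ j) s j" if pj: "par j = Some i" for j i
  proof (cases s)
    case 0
    have "\<forall>k\<in>- sub j. (0::int) \<le> int s \<and> int s + (int tm + 1) - int (tree_dist par j k) * (int tm + 1) \<le> 0"
    proof
      fix k assume "k \<in> - sub j"
      then have "int tm + 1 \<le> int (tree_dist par j k) * (int tm + 1)" using dist_ge by simp
      then show "(0::int) \<le> int s \<and> int s + (int tm + 1) - int (tree_dist par j k) * (int tm + 1) \<le> 0"
        using 0 by linarith
    qed
    then show ?thesis unfolding Brep_def using 0 by (intro exI[of _ "\<lambda>_. 0"]) (simp add: bet0)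
  next
    case (Suc s')
    have jC: "j \<in> C i" using pj unfolding children_def by simp
    obtain F where F: "\<And>c. par c \<noteq> None \<Longrightarrow> ahat s' $ c = (\<Sum>k\<in>sub c. lamI (F c k) k) \<and>
       (\<forall>k\<in>sub c. F c k \<le> int s' \<and> int s' - int tm - int (card (P k - P c)) * (int tm + 1) \<le> F c k)"
      using H_choice[of s'] rep_ah[of s'] by blast
    have "BHrep (bh s' $ i) s' i" using less.IH[of s'] Suc by simp
    then obtain \<sigma>o where O: "bh s' $ i = (\<Sum>k\<in>- sub i. M $ i $ k * lamI (\<sigma>o k) k)"
      and Ob: "\<forall>k\<in>- sub i. \<sigma>o k \<le> int s' \<and> int s' + 1 - int (tree_dist par i k) * (int tm + 1) \<le> \<sigma>o k"
      unfolding BHrep_def by blast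
    define \<sigma> where "\<sigma> = (\<lambda>k. if k = i then int s else if k \<in> sub i then F (ct i k) k else \<sigma>o k)"
    have cpar: "par c \<noteq> None" if "c \<in> C i" for c using that unfolding children_def by auto
    have "bet s $ j = M $ i $ i * (lam s i + (\<Sum>c\<in>C i - {j}. ahat s' $ c)) + bh s' $ i"
      using step_bet[OF pj] Suc by simp
    also have "\<dots> = (\<Sum>k\<in>insert i (\<Union>c\<in>C i - {j}. sub c) \<union> - sub i. M $ j $ k * lamI (\<sigma> k) k)"
    proof (rule combine[where F=F and \<sigma>o=\<sigma>o, OF _ _ O \<sigma>_def])
      show "C i - {j} \<subseteq> C i" by blast
      show "ahat s' $ c = (\<Sum>k\<in>sub c. lamI (F c k) k)" if "c \<in> C i - {j}" for c
        using F[OF cpar] that by blast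
      show "M $ j $ k = M $ i $ k" if "k \<in> insert i (\<Union>c\<in>C i - {j}. sub c) \<union> - sub i" for k
        using that set_B[OF pj] M_child_out[OF pj] by blast
    qed
    also have "\<dots> = (\<Sum>k\<in>- sub j. M $ j $ k * lamI (\<sigma> k) k)" using set_B[OF pj] by simp
    finally have val: "bet s $ j = (\<Sum>k\<in>- sub j. M $ j $ k * lamI (\<sigma> k) k)" .
    have bnd: "\<sigma> k \<le> int s \<and> int s + (int tm + 1) - int (tree_dist par j k) * (int tm + 1) \<le> \<sigma> k"
      if kj: "k \<in> - sub j" for k
    proof -
      consider "k = i" | "k \<noteq> i" "k \<in> sub i" | "k \<notin> sub i" by blast
      then show ?thesis
      proof cases
        case 1 then show ?thesis using D6[OF pj] by (simp add: \<sigma>_def)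
      next
        case 2
        define c where "c = ct i k"
        have cC: "c \<in> C i" and kc: "k \<in> sub c" using ct_in[OF 2(2,1)] by (auto simp: c_def)
        have cj: "c \<noteq> j" using kc kj by auto
        have sk: "\<sigma> k = F c k" using 2 by (simp add: \<sigma>_def c_def)
        have Fb: "F c k \<le> int s' \<and> int s' - int tm - int (card (P k - P c)) * (int tm + 1) \<le> F c k"
          using F[OF cpar[OF cC]] kc by blast
        have d: "tree_dist par j k = card (P k - P c) + 2" using D5[OF pj cC cj kc] .
        have e: "int (card (P k - P c) + 2) * (int tm + 1) = int (card (P k - P c)) * (int tm + 1) + 2 * int tm + 2"
          by (simp add: algebra_simps)
        show ?thesis unfolding sk d e using Fb Suc by simp
      next
        case 3
        have sk: "\<sigma> k = \<sigma>o k" using 3 P_self unfolding sub_def \<sigma>_def by auto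
        have Obk: "\<sigma>o k \<le> int s' \<and> int s' + 1 - int (tree_dist par i k) * (int tm + 1) \<le> \<sigma>o k"
          using Ob 3 by blast
        have d: "tree_dist par j k = tree_dist par i k + 1" using D3[OF pj 3] .
        have e: "int (tree_dist par i k + 1) * (int tm + 1) = int (tree_dist par i k) * (int tm + 1) + int tm + 1"
          by (simp add: algebra_simps)
        show ?thesis unfolding sk d e using Obk Suc by simp
      qed
    qed
    show ?thesis unfolding Brep_def using val bnd by (intro exI[of _ \<sigma>]) simp
  qed
  have BH: "BHrep (bh s $ j) s j" for j
  proof (cases "par j")
    case None
    have "\<forall>k\<in>- sub j. int s \<le> int s \<and> int s + 1 - int (tree_dist par j k) * (int tm + 1) \<le> int s"
    proof
      fix k assume "k \<in> - sub j"
      then have "int tm + 1 \<le> int (tree_dist par j k) * (int tm + 1)" using dist_ge by simp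
      then show "int s \<le> int s \<and> int s + 1 - int (tree_dist par j k) * (int tm + 1) \<le> int s"
        by linarith
    qed
    moreover have "(\<Sum>k\<in>- sub j. M $ j $ k * lamI (int s) k) = 0"
      using M_root[OF None] by simp
    ultimately show ?thesis unfolding BHrep_def using root_bh[OF None]
      by (intro exI[of _ "\<lambda>_. int s"]) simp
  next
    case (Some i)
    have pj: "par j \<noteq> None" using Some by simp
    have zero: "BHrep 0 s j" if lt: "int s \<le> int tm"
    proof -
      have "\<forall>k\<in>- sub j. (0::int) \<le> int s \<and> int s + 1 - int (tree_dist par j k) * (int tm + 1) \<le> 0"
      proof
        fix k assume "k \<in> - sub j"
        then have "int tm + 1 \<le> int (tree_dist par j k) * (int tm + 1)" using dist_ge by simp
        then show "(0::int) \<le> int s \<and> int s + 1 - int (tree_dist par j k) * (int tm + 1) \<le> 0"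
          using lt by linarith
      qed
      then show ?thesis unfolding BHrep_def by (intro exI[of _ "\<lambda>_. 0"]) simp
    qed
    show ?thesis
    proof (cases s)
      case 0 then show ?thesis using zero by (simp add: bh0)
    next
      case (Suc s')
      show ?thesis
      proof (cases "tau_down j s' \<le> Suc s'")
        case True
        define m where "m = s - tau_down j s'"
        have am: "bh s $ j = bet m $ j" using step_bh[OF pj] True Suc by (simp add: m_def)
        have "Brep (bet m $ j) m j"
        proof (cases "m < s")
          case True then show ?thesis using less.IH[of m] Some by blast
        next
          case False then have "m = s" by (simp add: m_def)
          then show ?thesis using B[OF Some] by simp
        qed
        then obtain \<sigma> where \<sigma>: "bet m $ j = (\<Sum>k\<in>- sub j. M $ j $ k * lamI (\<sigma> k) k)"
          "\<forall>k\<in>- sub j. \<sigma> k \<le> int m \<and> int m + (int tm + 1) - int (tree_dist par j k) * (int tm + 1) \<le> \<sigma> k"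
          unfolding Brep_def by blast
        have ms: "int m \<ge> int s - int tm" "m \<le> s" using delay_down[of j s'] True Suc by (auto simp: m_def)
        have "\<forall>k\<in>- sub j. \<sigma> k \<le> int s \<and> int s + 1 - int (tree_dist par j k) * (int tm + 1) \<le> \<sigma> k"
        proof
          fix k assume "k \<in> - sub j"
          with \<sigma>(2) have "\<sigma> k \<le> int m" "int m + (int tm + 1) - int (tree_dist par j k) * (int tm + 1) \<le> \<sigma> k" by auto
          then show "\<sigma> k \<le> int s \<and> int s + 1 - int (tree_dist par j k) * (int tm + 1) \<le> \<sigma> k"
            using ms by linarith
        qed
        then show ?thesis unfolding BHrep_def using am \<sigma>(1) by (intro exI[of _ \<sigma>]) simp
      next
        case False
        then have lt: "int s \<le> int tm" using delay_down[of j s'] Suc by simp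
        have z: "bh s $ j = 0" using step_bh[OF pj] False Suc by simp
        show ?thesis using zero[OF lt] z by simp
      qed
    qed
  qed
  show ?case using B BH by blast
qed

lemma rep_z: "Zrep (z s $ i) s i"
proof (cases s)
  case 0
  have "\<forall>k. (0::int) \<le> int s \<and> int s - int (tree_dist par i k) * (int tm + 1) \<le> 0"
  proof
    fix k
    have "0 \<le> int (tree_dist par i k) * (int tm + 1)" by simp
    then show "(0::int) \<le> int s \<and> int s - int (tree_dist par i k) * (int tm + 1) \<le> 0" using 0 by linarith
  qed
  then show ?thesis unfolding Zrep_def using 0 by (intro exI[of _ "\<lambda>_. 0"]) (simp add: z0)
next
  case (Suc s')
  obtain F where F: "\<And>c. par c \<noteq> None \<Longrightarrow> ahat s $ c = (\<Sum>k\<in>sub c. lamI (F c k) k) \<and>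
     (\<forall>k\<in>sub c. F c k \<le> int s \<and> int s - int tm - int (card (P k - P c)) * (int tm + 1) \<le> F c k)"
    using H_choice[of s] rep_ah[of s] by blast
  have "BHrep (bh s $ i) s i" using rep_b[of s] by simp
  then obtain \<sigma>o where O: "bh s $ i = (\<Sum>k\<in>- sub i. M $ i $ k * lamI (\<sigma>o k) k)"
    and Ob: "\<forall>k\<in>- sub i. \<sigma>o k \<le> int s \<and> int s + 1 - int (tree_dist par i k) * (int tm + 1) \<le> \<sigma>o k"
    unfolding BHrep_def by blast
  define \<sigma> where "\<sigma> = (\<lambda>k. if k = i then int s else if k \<in> sub i then F (ct i k) k else \<sigma>o k)"
  have cpar: "par c \<noteq> None" if "c \<in> C i" for c using that unfolding children_def by auto
  have "z s $ i = M $ i $ i * (lam s i + (\<Sum>c\<in>C i. ahat s $ c)) + bh s $ i"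
    using step_z Suc by simp
  also have "\<dots> = (\<Sum>k\<in>insert i (\<Union>c\<in>C i. sub c) \<union> - sub i. M $ i $ k * lamI (\<sigma> k) k)"
  proof (rule combine[where F=F and \<sigma>o=\<sigma>o, OF _ _ O \<sigma>_def])
    show "ahat s $ c = (\<Sum>k\<in>sub c. lamI (F c k) k)" if "c \<in> C i" for c
      using F[OF cpar] that by blast
  qed auto
  also have "\<dots> = (\<Sum>k\<in>UNIV. M $ i $ k * lamI (\<sigma> k) k)" using set_Z[of i] by simp
  finally have val: "z s $ i = (\<Sum>k\<in>UNIV. M $ i $ k * lamI (\<sigma> k) k)" .
  have bnd: "\<sigma> k \<le> int s \<and> int s - int (tree_dist par i k) * (int tm + 1) \<le> \<sigma> k" for k
  proof -
    consider "k = i" | "k \<noteq> i" "k \<in> sub i" | "k \<notin> sub i" by blast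
    then show ?thesis
    proof cases
      case 1 then show ?thesis by (simp add: \<sigma>_def tree_dist_self)
    next
      case 2
      define c where "c = ct i k"
      have cC: "c \<in> C i" and kc: "k \<in> sub c" using ct_in[OF 2(2,1)] by (auto simp: c_def)
      have sk: "\<sigma> k = F c k" using 2 by (simp add: \<sigma>_def c_def)
      have Fb: "F c k \<le> int s \<and> int s - int tm - int (card (P k - P c)) * (int tm + 1) \<le> F c k"
        using F[OF cpar[OF cC]] kc by blast
      have d: "tree_dist par i k = card (P k - P c) + 1" using D2[OF 2(2)] D1[OF cC kc] by simp
      have e: "int (card (P k - P c) + 1) * (int tm + 1) = int (card (P k - P c)) * (int tm + 1) + int tm + 1"
        by (simp add: algebra_simps)
      show ?thesis unfolding sk d e using Fb by simp
    next
      case 3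
      have sk: "\<sigma> k = \<sigma>o k" using 3 P_self unfolding sub_def \<sigma>_def by auto
      have Obk: "\<sigma>o k \<le> int s \<and> int s + 1 - int (tree_dist par i k) * (int tm + 1) \<le> \<sigma>o k"
        using Ob 3 by blast
      show ?thesis unfolding sk using Obk by simp
    qed
  qed
  show ?thesis unfolding Zrep_def using val bnd by (intro exI[of _ \<sigma>]) simp
qed

end



lemma clamp_in: "lo \<le> hi \<Longrightarrow> lo \<le> clamp x lo hi \<and> clamp x lo hi \<le> hi"
  unfolding clamp_def by auto

lemma clamp_lip: "\<bar>clamp x lo hi - clamp y lo hi\<bar> \<le> \<bar>x - y\<bar>"
  unfolding clamp_def by (auto simp: min_def max_def)

lemma quad_min:
  fixes a b z lo hi x :: real
  assumes a: "a > 0" and "lo \<le> hi" "lo \<le> x" "x \<le> hi"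
  shows "a/2 * (clamp ((z - b)/a) lo hi)^2 + b * clamp ((z - b)/a) lo hi - z * clamp ((z - b)/a) lo hi
       \<le> a/2 * x^2 + b * x - z * x"
proof -
  define c where "c = (z - b)/a"
  define y where "y = clamp c lo hi"
  have zc: "z = b + a * c" using a by (simp add: c_def)
  have "\<bar>y - c\<bar> \<le> \<bar>x - c\<bar>" using assms unfolding y_def clamp_def by (auto simp: min_def max_def)
  then have "(y - c)^2 \<le> (x - c)^2" by (simp add: abs_le_square_iff)
  then have "a/2 * (y - c)^2 \<le> a/2 * (x - c)^2" using a by simp
  then have "a/2 * y^2 + b * y - z * y \<le> a/2 * x^2 + b * x - z * x"
    unfolding zc by (simp add: power2_eq_square algebra_simps)
  then show ?thesis unfolding y_def c_def .
qed

definition zvec :: "real^'n^'n \<Rightarrow> (real^'n) \<times> (real^'n) \<Rightarrow> real^'n" where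
  "zvec R \<mu> = (\<chi> i. \<Sum>k\<in>UNIV. R $ k $ i * (fst \<mu> $ k - snd \<mu> $ k))"

definition pst :: "real^'n^'n \<Rightarrow> real^'n \<Rightarrow> real^'n \<Rightarrow> real^'n \<Rightarrow> real^'n \<Rightarrow> (real^'n) \<times> (real^'n) \<Rightarrow> real^'n" where
  "pst R a b lo hi \<mu> = (\<chi> i. clamp ((zvec R \<mu> $ i - b $ i) / a $ i) (lo $ i) (hi $ i))"

definition lag where
  "lag R X v0 vlo vhi aP bP cP aQ bQ cQ \<mu> p q =
     quad_cost aP bP cP p + quad_cost aQ bQ cQ q
          + inner (fst \<mu>) (vlo - voltage R X v0 p q) + inner (snd \<mu>) (voltage R X v0 p q - vhi)"

lemma inner_mv: "inner (u::real^'n) (R *v p) = inner (\<chi> i. \<Sum>k\<in>UNIV. R $ k $ i * u $ k) p"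
proof -
  have "inner u (R *v p) = (\<Sum>k\<in>UNIV. \<Sum>i\<in>UNIV. u $ k * (R $ k $ i * p $ i))"
    by (simp add: inner_vec_def matrix_vector_mult_def sum_distrib_left)
  also have "\<dots> = (\<Sum>i\<in>UNIV. \<Sum>k\<in>UNIV. u $ k * (R $ k $ i * p $ i))" by (rule sum.swap)
  also have "\<dots> = inner (\<chi> i. \<Sum>k\<in>UNIV. R $ k $ i * u $ k) p"
    by (simp add: inner_vec_def sum_distrib_left mult_ac)
  finally show ?thesis .
qed

lemma lag_split:
  "lag R X v0 vlo vhi aP bP cP aQ bQ cQ \<mu> p q =
     (\<Sum>i\<in>UNIV. aP$i/2 * (p$i)^2 + bP$i * p$i - zvec R \<mu> $ i * p$i)
   + (\<Sum>i\<in>UNIV. aQ$i/2 * (q$i)^2 + bQ$i * q$i - zvec X \<mu> $ i * q$i)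
   + ((\<Sum>i\<in>UNIV. cP$i) + (\<Sum>i\<in>UNIV. cQ$i) + inner (fst \<mu>) (vlo - (\<chi> i. v0)) + inner (snd \<mu>) ((\<chi> i. v0) - vhi))"
proof -
  have zR: "inner (fst \<mu>) (R *v p) - inner (snd \<mu>) (R *v p) = (\<Sum>i\<in>UNIV. zvec R \<mu> $ i * p$i)"
    unfolding inner_diff_left[symmetric] inner_mv
    by (simp add: inner_vec_def zvec_def algebra_simps sum_subtractf)
  have zX: "inner (fst \<mu>) (X *v q) - inner (snd \<mu>) (X *v q) = (\<Sum>i\<in>UNIV. zvec X \<mu> $ i * q$i)"
    unfolding inner_diff_left[symmetric] inner_mv
    by (simp add: inner_vec_def zvec_def algebra_simps sum_subtractf)
  show ?thesis
    unfolding lag_def voltage_def quad_cost_def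
    using zR zX
    by (simp add: inner_diff_right inner_add_right sum.distrib sum_subtractf algebra_simps)
qed


lemma pst_in: "(\<And>i. lo $ i \<le> hi $ i) \<Longrightarrow> pst R a b lo hi \<mu> \<in> vbox lo hi"
  unfolding pst_def vbox_def using clamp_in by simp

lemma lag_min:
  assumes aP: "\<And>i. aP $ i > 0" and aQ: "\<And>i. aQ $ i > 0"
    and pl: "\<And>i. plo $ i \<le> phi $ i" and ql: "\<And>i. qlo $ i \<le> qhi $ i"
    and p: "p \<in> vbox plo phi" and q: "q \<in> vbox qlo qhi"
  shows "lag R X v0 vlo vhi aP bP cP aQ bQ cQ \<mu> (pst R aP bP plo phi \<mu>) (pst X aQ bQ qlo qhi \<mu>)
       \<le> lag R X v0 vlo vhi aP bP cP aQ bQ cQ \<mu> p q"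
proof -
  have 1: "(\<Sum>i\<in>UNIV. aP$i/2 * (pst R aP bP plo phi \<mu> $i)^2 + bP$i * pst R aP bP plo phi \<mu> $i - zvec R \<mu> $ i * pst R aP bP plo phi \<mu> $i)
     \<le> (\<Sum>i\<in>UNIV. aP$i/2 * (p$i)^2 + bP$i * p$i - zvec R \<mu> $ i * p$i)"
  proof (rule sum_mono)
    fix i
    have h: "plo $ i \<le> p $ i" "p $ i \<le> phi $ i" using p by (auto simp: vbox_def)
    show "aP$i/2 * (pst R aP bP plo phi \<mu> $i)^2 + bP$i * pst R aP bP plo phi \<mu> $i - zvec R \<mu> $ i * pst R aP bP plo phi \<mu> $i
     \<le> aP$i/2 * (p$i)^2 + bP$i * p$i - zvec R \<mu> $ i * p$i"
      unfolding pst_def using quad_min[OF aP pl h(1) h(2), where z="zvec R \<mu> $ i" and b="bP $ i"] by simp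
  qed
  have 2: "(\<Sum>i\<in>UNIV. aQ$i/2 * (pst X aQ bQ qlo qhi \<mu> $i)^2 + bQ$i * pst X aQ bQ qlo qhi \<mu> $i - zvec X \<mu> $ i * pst X aQ bQ qlo qhi \<mu> $i)
     \<le> (\<Sum>i\<in>UNIV. aQ$i/2 * (q$i)^2 + bQ$i * q$i - zvec X \<mu> $ i * q$i)"
  proof (rule sum_mono)
    fix i
    have h: "qlo $ i \<le> q $ i" "q $ i \<le> qhi $ i" using q by (auto simp: vbox_def)
    show "aQ$i/2 * (pst X aQ bQ qlo qhi \<mu> $i)^2 + bQ$i * pst X aQ bQ qlo qhi \<mu> $i - zvec X \<mu> $ i * pst X aQ bQ qlo qhi \<mu> $i
     \<le> aQ$i/2 * (q$i)^2 + bQ$i * q$i - zvec X \<mu> $ i * q$i"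
      unfolding pst_def using quad_min[OF aQ ql h(1) h(2), where z="zvec X \<mu> $ i" and b="bQ $ i"] by simp
  qed
  show ?thesis unfolding lag_split using 1 2 by linarith
qed

lemma dual_eq:
  assumes aP: "\<And>i. aP $ i > 0" and aQ: "\<And>i. aQ $ i > 0"
    and pl: "\<And>i. plo $ i \<le> phi $ i" and ql: "\<And>i. qlo $ i \<le> qhi $ i"
  shows "dual_fun R X v0 vlo vhi plo phi qlo qhi aP bP cP aQ bQ cQ \<mu>
      = lag R X v0 vlo vhi aP bP cP aQ bQ cQ \<mu> (pst R aP bP plo phi \<mu>) (pst X aQ bQ qlo qhi \<mu>)"
proof -
  have "dual_fun R X v0 vlo vhi plo phi qlo qhi aP bP cP aQ bQ cQ \<mu> =
     Inf {lag R X v0 vlo vhi aP bP cP aQ bQ cQ \<mu> p q | p q. p \<in> vbox plo phi \<and> q \<in> vbox qlo qhi}"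
    by (simp add: dual_fun_def lag_def)
  also have "\<dots> = lag R X v0 vlo vhi aP bP cP aQ bQ cQ \<mu> (pst R aP bP plo phi \<mu>) (pst X aQ bQ qlo qhi \<mu>)"
  proof (rule cInf_eq_minimum)
    show "lag R X v0 vlo vhi aP bP cP aQ bQ cQ \<mu> (pst R aP bP plo phi \<mu>) (pst X aQ bQ qlo qhi \<mu>)
      \<in> {lag R X v0 vlo vhi aP bP cP aQ bQ cQ \<mu> p q | p q. p \<in> vbox plo phi \<and> q \<in> vbox qlo qhi}"
      using pst_in[OF pl] pst_in[OF ql] by blast
  next
    fix x assume "x \<in> {lag R X v0 vlo vhi aP bP cP aQ bQ cQ \<mu> p q | p q. p \<in> vbox plo phi \<and> q \<in> vbox qlo qhi}"
    then show "lag R X v0 vlo vhi aP bP cP aQ bQ cQ \<mu> (pst R aP bP plo phi \<mu>) (pst X aQ bQ qlo qhi \<mu>) \<le> x"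
      using lag_min[OF aP aQ pl ql] by blast
  qed
  finally show ?thesis .
qed

lemma lag_affine:
  "lag R X v0 vlo vhi aP bP cP aQ bQ cQ \<mu> p q = lag R X v0 vlo vhi aP bP cP aQ bQ cQ la p q
     + inner (\<mu> - la) (vlo - voltage R X v0 p q, voltage R X v0 p q - vhi)"
  by (cases \<mu>; cases la) (simp add: lag_def inner_diff_left algebra_simps)

lemma grad_eq:
  assumes aP: "\<And>i. aP $ i > 0" and aQ: "\<And>i. aQ $ i > 0"
    and pl: "\<And>i. plo $ i \<le> phi $ i" and ql: "\<And>i. qlo $ i \<le> qhi $ i"
    and G: "has_gradient (dual_fun R X v0 vlo vhi plo phi qlo qhi aP bP cP aQ bQ cQ) G la"
  shows "G = (vlo - voltage R X v0 (pst R aP bP plo phi la) (pst X aQ bQ qlo qhi la),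
              voltage R X v0 (pst R aP bP plo phi la) (pst X aQ bQ qlo qhi la) - vhi)"
    (is "G = ?g")
proof -
  let ?D = "dual_fun R X v0 vlo vhi plo phi qlo qhi aP bP cP aQ bQ cQ"
  let ?L = "lag R X v0 vlo vhi aP bP cP aQ bQ cQ"
  let ?ps = "pst R aP bP plo phi la" and ?qs = "pst X aQ bQ qlo qhi la"
  define f where "f \<mu> = ?D \<mu> - inner ?g \<mu>" for \<mu>
  have le: "f \<mu> \<le> f la" for \<mu>
  proof -
    have "?D \<mu> \<le> ?L \<mu> ?ps ?qs"
      unfolding dual_eq[OF aP aQ pl ql] by (rule lag_min[OF aP aQ pl ql pst_in[OF pl] pst_in[OF ql]])
    also have "\<dots> = ?L la ?ps ?qs + inner (\<mu> - la) ?g" by (rule lag_affine)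
    also have "\<dots> = ?D la + inner (\<mu> - la) ?g" using dual_eq[OF aP aQ pl ql] by simp
    finally show ?thesis unfolding f_def by (simp add: inner_diff_left inner_commute)
  qed
  have d: "(f has_derivative (\<lambda>h. inner G h - inner ?g h)) (at la)"
    unfolding f_def using G unfolding has_gradient_def
    by (intro has_derivative_diff has_derivative_inner_right[OF has_derivative_ident])
  have "(\<lambda>h. inner G h - inner ?g h) = (\<lambda>h. 0)"
    by (rule has_derivative_local_max[OF d]) (use le in \<open>auto intro: always_eventually\<close>)
  then have "inner G (G - ?g) - inner ?g (G - ?g) = 0" by meson
  then have "inner (G - ?g) (G - ?g) = 0" by (simp add: inner_diff_left)
  then show ?thesis by simp
qed




lemma tele0: "\<bar>f b - f (b + int n)\<bar> \<le> (\<Sum>\<tau>\<in>{b..<b + int n}. \<bar>f (\<tau> + 1) - f \<tau>\<bar>)" for f :: "int \<Rightarrow> real"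
proof (induction n)
  case (Suc n)
  have e: "{b..<b + int (Suc n)} = insert (b + int n) {b..<b + int n}" by auto
  have eq: "b + int (Suc n) = b + int n + 1" by simp
  have "\<bar>f b - f (b + int (Suc n))\<bar> \<le> \<bar>f b - f (b + int n)\<bar> + \<bar>f (b + int n + 1) - f (b + int n)\<bar>"
    unfolding eq by (smt (verit))
  also have "\<dots> \<le> (\<Sum>\<tau>\<in>{b..<b + int n}. \<bar>f (\<tau> + 1) - f \<tau>\<bar>) + \<bar>f (b + int n + 1) - f (b + int n)\<bar>"
    using Suc by simp
  also have "\<dots> = (\<Sum>\<tau>\<in>{b..<b + int (Suc n)}. \<bar>f (\<tau> + 1) - f \<tau>\<bar>)" unfolding e by simp
  finally show ?case .
qed simp

lemma tele:
  fixes f :: "int \<Rightarrow> real"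
  assumes "a \<le> b" "b \<le> c"
  shows "\<bar>f b - f c\<bar> \<le> (\<Sum>\<tau>\<in>{a..<c}. \<bar>f (\<tau> + 1) - f \<tau>\<bar>)"
proof -
  have "c = b + int (nat (c - b))" using assms by simp
  then have "\<bar>f b - f c\<bar> \<le> (\<Sum>\<tau>\<in>{b..<c}. \<bar>f (\<tau> + 1) - f \<tau>\<bar>)" using tele0[of f b "nat (c - b)"] by simp
  also have "\<dots> \<le> (\<Sum>\<tau>\<in>{a..<c}. \<bar>f (\<tau> + 1) - f \<tau>\<bar>)"
    by (rule sum_mono2) (use assms in auto)
  finally show ?thesis .
qed

context chan begin

lemma z_bound:
  assumes wn: "\<And>k. w k \<ge> 0"
  shows "\<bar>z t $ i - (\<Sum>k\<in>UNIV. M $ i $ k * lam t k)\<bar>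
     \<le> (\<Sum>k\<in>UNIV. M $ i $ k * (\<Sum>\<tau>\<in>{int t - int (diam par * (tm + 1))..<int t}. \<bar>lamI (\<tau> + 1) k - lamI \<tau> k\<bar>))"
proof -
  obtain \<sigma> where val: "z t $ i = (\<Sum>k\<in>UNIV. M $ i $ k * lamI (\<sigma> k) k)"
    and bnd: "\<And>k. \<sigma> k \<le> int t \<and> int t - int (tree_dist par i k) * (int tm + 1) \<le> \<sigma> k"
    using rep_z[of t i] unfolding Zrep_def by blast
  have "z t $ i - (\<Sum>k\<in>UNIV. M $ i $ k * lam t k) = (\<Sum>k\<in>UNIV. M $ i $ k * (lamI (\<sigma> k) k - lamI (int t) k))"
    unfolding val by (simp add: sum_subtractf right_diff_distrib)
  also have "\<bar>\<dots>\<bar> \<le> (\<Sum>k\<in>UNIV. \<bar>M $ i $ k * (lamI (\<sigma> k) k - lamI (int t) k)\<bar>)" by (rule sum_abs)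
  also have "\<dots> \<le> (\<Sum>k\<in>UNIV. M $ i $ k * (\<Sum>\<tau>\<in>{int t - int (diam par * (tm + 1))..<int t}. \<bar>lamI (\<tau> + 1) k - lamI \<tau> k\<bar>))"
  proof (rule sum_mono)
    fix k
    have Mn: "M $ i $ k \<ge> 0" using M_nonneg wn by blast
    have "int (tree_dist par i k) * (int tm + 1) \<le> int (diam par) * (int tm + 1)"
      using D7[of i k] by (intro mult_right_mono) auto
    moreover have "int (diam par * (tm + 1)) = int (diam par) * (int tm + 1)" by (simp add: algebra_simps)
    ultimately have lo: "int t - int (diam par * (tm + 1)) \<le> \<sigma> k" using bnd[of k] by linarith
    have "\<bar>lamI (\<sigma> k) k - lamI (int t) k\<bar> \<le> (\<Sum>\<tau>\<in>{int t - int (diam par * (tm + 1))..<int t}. \<bar>lamI (\<tau> + 1) k - lamI \<tau> k\<bar>)"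
      using tele[OF lo, of "int t" "\<lambda>s. lamI s k"] bnd[of k] by simp
    then show "\<bar>M $ i $ k * (lamI (\<sigma> k) k - lamI (int t) k)\<bar> \<le> M $ i $ k * (\<Sum>\<tau>\<in>{int t - int (diam par * (tm + 1))..<int t}. \<bar>lamI (\<tau> + 1) k - lamI \<tau> k\<bar>)"
      using Mn by (simp add: abs_mult mult_left_mono)
  qed
  finally show ?thesis .
qed

end



lemma sum_sqrt2: "0 \<le> a \<Longrightarrow> 0 \<le> b \<Longrightarrow> a + b \<le> sqrt 2 * sqrt (a^2 + b^2)"
proof -
  assume "0 \<le> a" "0 \<le> b"
  have "(a + b)^2 \<le> 2 * (a^2 + b^2)"
    using sum_squares_ge_zero[of "a - b" 0] by (simp add: power2_eq_square algebra_simps)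
  then have "a + b \<le> sqrt (2 * (a^2 + b^2))" by (rule real_le_rsqrt)
  then show ?thesis by (simp only: real_sqrt_mult)
qed

lemma W_bound:
  fixes E :: "int \<Rightarrow> (real^'n) \<times> (real^'n)"
  shows "norm (\<chi> k. \<bar>(fst (E (\<tau>+1)) $ k - snd (E (\<tau>+1)) $ k) - (fst (E \<tau>) $ k - snd (E \<tau>) $ k)\<bar>)
     \<le> sqrt 2 * norm (E \<tau> - E (\<tau> + 1))"
proof -
  define d where "d = E (\<tau>+1) - E \<tau>"
  have "norm (\<chi> k. \<bar>(fst (E (\<tau>+1)) $ k - snd (E (\<tau>+1)) $ k) - (fst (E \<tau>) $ k - snd (E \<tau>) $ k)\<bar>)
     \<le> norm (fst d - snd d)"
    by (rule norm_le_componentwise_cart) (simp add: d_def algebra_simps)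
  also have "\<dots> \<le> norm (fst d) + norm (snd d)" by (rule norm_triangle_ineq4)
  also have "\<dots> \<le> sqrt 2 * sqrt ((norm (fst d))^2 + (norm (snd d))^2)" by (rule sum_sqrt2) auto
  also have "sqrt ((norm (fst d))^2 + (norm (snd d))^2) = norm d"
    using norm_Pair[of "fst d" "snd d"] by simp
  also have "norm d = norm (E \<tau> - E (\<tau> + 1))" unfolding d_def by (rule norm_minus_commute)
  finally show ?thesis .
qed

lemma V_bound:
  fixes E :: "int \<Rightarrow> (real^'n) \<times> (real^'n)"
  shows "norm (\<chi> k. \<Sum>\<tau>\<in>A. \<bar>(fst (E (\<tau>+1)) $ k - snd (E (\<tau>+1)) $ k) - (fst (E \<tau>) $ k - snd (E \<tau>) $ k)\<bar>)
     \<le> sqrt 2 * (\<Sum>\<tau>\<in>A. norm (E \<tau> - E (\<tau> + 1)))"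
proof -
  have "(\<chi> k. \<Sum>\<tau>\<in>A. \<bar>(fst (E (\<tau>+1)) $ k - snd (E (\<tau>+1)) $ k) - (fst (E \<tau>) $ k - snd (E \<tau>) $ k)\<bar>)
     = (\<Sum>\<tau>\<in>A. (\<chi> k. \<bar>(fst (E (\<tau>+1)) $ k - snd (E (\<tau>+1)) $ k) - (fst (E \<tau>) $ k - snd (E \<tau>) $ k)\<bar>))"
    by (simp add: vec_eq_iff sum_component)
  also have "norm \<dots> \<le> (\<Sum>\<tau>\<in>A. norm (\<chi> k. \<bar>(fst (E (\<tau>+1)) $ k - snd (E (\<tau>+1)) $ k) - (fst (E \<tau>) $ k - snd (E \<tau>) $ k)\<bar>))"
    by (rule norm_sum)
  also have "\<dots> \<le> (\<Sum>\<tau>\<in>A. sqrt 2 * norm (E \<tau> - E (\<tau> + 1)))"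
    by (rule sum_mono) (rule W_bound)
  also have "\<dots> = sqrt 2 * (\<Sum>\<tau>\<in>A. norm (E \<tau> - E (\<tau> + 1)))" by (simp add: sum_distrib_left)
  finally show ?thesis .
qed

context chan begin

definition Vv :: "nat \<Rightarrow> real^'n" where
  "Vv t = (\<chi> k. \<Sum>\<tau>\<in>{int t - int (diam par * (tm + 1))..<int t}. \<bar>lamI (\<tau> + 1) k - lamI \<tau> k\<bar>)"

lemma p_bound:
  assumes wn: "\<And>k. w k \<ge> 0" and apos: "\<And>i. a $ i > 0" and am: "0 < amin" "\<And>i. amin \<le> a $ i"
    and mu: "\<And>k. fst \<mu> $ k - snd \<mu> $ k = lam t k"
  shows "norm ((\<chi> i. clamp ((z t $ i - b $ i) / a $ i) (lo $ i) (hi $ i)) - pst M a b lo hi \<mu>)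
     \<le> spec_norm M * norm (Vv t) / amin"
proof -
  have zv: "zvec M \<mu> $ i = (\<Sum>k\<in>UNIV. M $ i $ k * lam t k)" for i
    unfolding zvec_def using mu M_sym by simp
  have comp: "\<bar>((\<chi> i. clamp ((z t $ i - b $ i) / a $ i) (lo $ i) (hi $ i)) - pst M a b lo hi \<mu>) $ i\<bar>
      \<le> ((1 / amin) *\<^sub>R (M *v Vv t)) $ i" for i
  proof -
    have "\<bar>((\<chi> i. clamp ((z t $ i - b $ i) / a $ i) (lo $ i) (hi $ i)) - pst M a b lo hi \<mu>) $ i\<bar>
       \<le> \<bar>(z t $ i - b $ i) / a $ i - (zvec M \<mu> $ i - b $ i) / a $ i\<bar>"
      unfolding pst_def by (simp add: clamp_lip)
    also have "\<dots> = \<bar>z t $ i - zvec M \<mu> $ i\<bar> / a $ i"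
      using apos[of i] by (simp add: diff_divide_distrib[symmetric])
    also have "\<dots> \<le> \<bar>z t $ i - zvec M \<mu> $ i\<bar> / amin"
      using apos[of i] am by (intro divide_left_mono) auto
    also have "\<bar>z t $ i - zvec M \<mu> $ i\<bar> \<le> (M *v Vv t) $ i"
      unfolding zv using z_bound[OF wn, of t i] by (simp add: matrix_vector_mult_def Vv_def)
    then have "\<bar>z t $ i - zvec M \<mu> $ i\<bar> / amin \<le> (M *v Vv t) $ i / amin"
      using am by (intro divide_right_mono) auto
    finally show ?thesis by simp
  qed
  have "norm ((\<chi> i. clamp ((z t $ i - b $ i) / a $ i) (lo $ i) (hi $ i)) - pst M a b lo hi \<mu>)
     \<le> norm ((1 / amin) *\<^sub>R (M *v Vv t))" (is "norm ?x \<le> norm ?y")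
  proof (rule norm_le_componentwise_cart)
    fix i
    have "\<bar>?x $ i\<bar> \<le> ?y $ i" by (rule comp)
    moreover have "?y $ i \<le> \<bar>?y $ i\<bar>" by (rule abs_ge_self)
    ultimately show "norm (?x $ i) \<le> norm (?y $ i)" unfolding real_norm_def by (rule order_trans)
  qed
  also have "\<dots> = norm (M *v Vv t) / amin" using am by simp
  also have "\<dots> \<le> spec_norm M * norm (Vv t) / amin"
    unfolding spec_norm_def using am by (intro divide_right_mono onorm) auto
  finally show ?thesis .
qed

end



theorem lemma3:
  fixes par :: "'n::finite \<Rightarrow> 'n option"
    and r x :: "'n \<Rightarrow> real"
    and v0 \<gamma> :: real
    and vlo vhi plo phi qlo qhi aP bP cP aQ bQ cQ :: "real^'n"
    and tau_up tau_down :: "'n \<Rightarrow> nat \<Rightarrow> nat"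
    and tau_max :: nat
    and zP zQ lamlo lamhi alpha betaP betaQ ahat bPhat bQhat :: "nat \<Rightarrow> real^'n"
    and t :: nat
  defines "R \<equiv> path_matrix par r"
    and "X \<equiv> path_matrix par x"
    and "C \<equiv> children par"
    and "lam \<equiv> (\<lambda>s i. lamlo s $ i - lamhi s $ i)"
    and "v \<equiv> (\<lambda>s. voltage (path_matrix par r) (path_matrix par x) v0 ((\<lambda>s. \<chi> i. clamp ((zP s $ i - bP $ i) / aP $ i) (plo $ i) (phi $ i)) s) ((\<lambda>s. \<chi> i. clamp ((zQ s $ i - bQ $ i) / aQ $ i) (qlo $ i) (qhi $ i)) s))"
    and "g \<equiv> (\<lambda>s. (vlo - (\<lambda>s. voltage (path_matrix par r) (path_matrix par x) v0 ((\<lambda>s. \<chi> i. clamp ((zP s $ i - bP $ i) / aP $ i) (plo $ i) (phi $ i)) s) ((\<lambda>s. \<chi> i. clamp ((zQ s $ i - bQ $ i) / aQ $ i) (qlo $ i) (qhi $ i)) s)) s, (\<lambda>s. voltage (path_matrix par r) (path_matrix par x) v0 ((\<lambda>s. \<chi> i. clamp ((zP s $ i - bP $ i) / aP $ i) (plo $ i) (phi $ i)) s) ((\<lambda>s. \<chi> i. clamp ((zQ s $ i - bQ $ i) / aQ $ i) (qlo $ i) (qhi $ i)) s)) s - vhi))"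
    and "D \<equiv> dual_fun (path_matrix par r) (path_matrix par x) v0 vlo vhi plo phi qlo qhi aP bP cP aQ bQ cQ"
    and "lamE \<equiv> (\<lambda>s::int. if s < 0 then (0, 0) else (lamlo (nat s), lamhi (nat s)))"
    and "amin \<equiv> min (Min (range (\<lambda>i. aP $ i))) (Min (range (\<lambda>i. aQ $ i)))"
    and "L \<equiv> 2 * ((spec_norm (path_matrix par r))\<^sup>2 + (spec_norm (path_matrix par x))\<^sup>2) / min (Min (range (\<lambda>i. aP $ i))) (Min (range (\<lambda>i. aQ $ i)))"
    and "t0 \<equiv> diam par * (tau_max + 1)"
  assumes radial: "is_radial par"
    and r_nonneg: "\<And>k. r k \<ge> 0" and x_nonneg: "\<And>k. x k \<ge> 0"
    and v_le: "\<And>i. vlo $ i \<le> vhi $ i"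
    and p_le: "\<And>i. plo $ i \<le> phi $ i"
    and q_le: "\<And>i. qlo $ i \<le> qhi $ i"
    and aP_pos: "\<And>i. aP $ i > 0" and aQ_pos: "\<And>i. aQ $ i > 0"
    and gamma_pos: "\<gamma> > 0"
    and delay_up: "\<And>j s. tau_up j s \<le> tau_max"
    and delay_down: "\<And>j s. tau_down j s \<le> tau_max"
    and init: "zP 0 = 0" "zQ 0 = 0" "lamlo 0 = 0" "lamhi 0 = 0"
      "alpha 0 = 0" "betaP 0 = 0" "betaQ 0 = 0" "ahat 0 = 0" "bPhat 0 = 0" "bQhat 0 = 0"
    and root_hat: "\<And>i s. par i = None \<Longrightarrow> bPhat s $ i = 0 \<and> bQhat s $ i = 0"
    and step_lamlo: "\<And>s i. lamlo (Suc s) $ i = max (lamlo s $ i + \<gamma> * (vlo $ i - v s $ i)) 0"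
    and step_lamhi: "\<And>s i. lamhi (Suc s) $ i = max (lamhi s $ i + \<gamma> * (v s $ i - vhi $ i)) 0"
    and step_alpha: "\<And>s i. alpha (Suc s) $ i = lam (Suc s) i + (\<Sum>j\<in>C i. ahat s $ j)"
    and step_betaP: "\<And>s i j. par j = Some i \<Longrightarrow>
       betaP (Suc s) $ j = R $ i $ i * (lam (Suc s) i + (\<Sum>k\<in>C i - {j}. ahat s $ k)) + bPhat s $ i"
    and step_betaQ: "\<And>s i j. par j = Some i \<Longrightarrow>
       betaQ (Suc s) $ j = X $ i $ i * (lam (Suc s) i + (\<Sum>k\<in>C i - {j}. ahat s $ k)) + bQhat s $ i"
    and step_ahat: "\<And>s j. par j \<noteq> None \<Longrightarrow>
       ahat (Suc s) $ j = (if tau_up j s \<le> Suc s then alpha (Suc s - tau_up j s) $ j else 0)"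
    and step_bPhat: "\<And>s j. par j \<noteq> None \<Longrightarrow>
       bPhat (Suc s) $ j = (if tau_down j s \<le> Suc s then betaP (Suc s - tau_down j s) $ j else 0)"
    and step_bQhat: "\<And>s j. par j \<noteq> None \<Longrightarrow>
       bQhat (Suc s) $ j = (if tau_down j s \<le> Suc s then betaQ (Suc s - tau_down j s) $ j else 0)"
    and step_zP: "\<And>s i. zP (Suc s) $ i = R $ i $ i * (lam (Suc s) i + (\<Sum>j\<in>C i. ahat (Suc s) $ j)) + bPhat (Suc s) $ i"
    and step_zQ: "\<And>s i. zQ (Suc s) $ i = X $ i $ i * (lam (Suc s) i + (\<Sum>j\<in>C i. ahat (Suc s) $ j)) + bQhat (Suc s) $ i"
  shows "\<forall>G. has_gradient D G (lamlo t, lamhi t) \<longrightarrow>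
           norm (G - g t) \<le> L * sqrt (real CARD('n))
              * (\<Sum>s\<in>{int t - int t0 ..< int t}. norm (lamE s - lamE (s + 1)))"
proof (intro allI impI)
  fix G assume HG: "has_gradient D G (lamlo t, lamhi t)"
  have sa: "\<And>s i. alpha (Suc s) $ i = (lamlo (Suc s) $ i - lamhi (Suc s) $ i) + (\<Sum>j\<in>children par i. ahat s $ j)"
    using step_alpha unfolding lam_def C_def .
  have sbP: "\<And>s i j. par j = Some i \<Longrightarrow> betaP (Suc s) $ j = path_matrix par r $ i $ i * ((lamlo (Suc s) $ i - lamhi (Suc s) $ i) + (\<Sum>k\<in>children par i - {j}. ahat s $ k)) + bPhat s $ i"
    using step_betaP unfolding lam_def C_def R_def .
  have sbQ: "\<And>s i j. par j = Some i \<Longrightarrow> betaQ (Suc s) $ j = path_matrix par x $ i $ i * ((lamlo (Suc s) $ i - lamhi (Suc s) $ i) + (\<Sum>k\<in>children par i - {j}. ahat s $ k)) + bQhat s $ i"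
    using step_betaQ unfolding lam_def C_def X_def .
  have szP: "\<And>s i. zP (Suc s) $ i = path_matrix par r $ i $ i * ((lamlo (Suc s) $ i - lamhi (Suc s) $ i) + (\<Sum>j\<in>children par i. ahat (Suc s) $ j)) + bPhat (Suc s) $ i"
    using step_zP unfolding lam_def C_def R_def .
  have szQ: "\<And>s i. zQ (Suc s) $ i = path_matrix par x $ i $ i * ((lamlo (Suc s) $ i - lamhi (Suc s) $ i) + (\<Sum>j\<in>children par i. ahat (Suc s) $ j)) + bQhat (Suc s) $ i"
    using step_zQ unfolding lam_def C_def X_def .
  have rP: "\<And>i s. par i = None \<Longrightarrow> bPhat s $ i = 0" using root_hat by blast
  have rQ: "\<And>i s. par i = None \<Longrightarrow> bQhat s $ i = 0" using root_hat by blast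
  interpret cP: chan par "\<lambda>s i. lamlo s $ i - lamhi s $ i" alpha ahat tau_up tau_max r betaP bPhat zP tau_down
    by unfold_locales (simp_all add: radial init sa sbP szP rP step_ahat step_bPhat delay_up delay_down)
  interpret cQ: chan par "\<lambda>s i. lamlo s $ i - lamhi s $ i" alpha ahat tau_up tau_max x betaQ bQhat zQ tau_down
    by unfold_locales (simp_all add: radial init sa sbQ szQ rQ step_ahat step_bQhat delay_up delay_down)
  let ?R = "path_matrix par r" and ?X = "path_matrix par x"
  let ?mu = "(lamlo t, lamhi t)"
  let ?V = "voltage ?R ?X v0"
  define ps where "ps = pst ?R aP bP plo phi ?mu"
  define qs where "qs = pst ?X aQ bQ qlo qhi ?mu"
  define pt where "pt = (\<chi> i. clamp ((zP t $ i - bP $ i) / aP $ i) (plo $ i) (phi $ i))"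
  define qt where "qt = (\<chi> i. clamp ((zQ t $ i - bQ $ i) / aQ $ i) (qlo $ i) (qhi $ i))"
  define S where "S = (\<Sum>s\<in>{int t - int t0 ..< int t}. norm (lamE s - lamE (s + 1)))"
  define sR where "sR = spec_norm ?R"
  define sX where "sX = spec_norm ?X"
  define A where "A = norm (cP.Vv t)"
  have finP: "finite (range (\<lambda>i. aP $ i))" "finite (range (\<lambda>i. aQ $ i))" by auto
  have amin_pos: "0 < amin"
  proof -
    have "Min (range (\<lambda>i. aP $ i)) \<in> range (\<lambda>i. aP $ i)" by (rule Min_in) auto
    moreover have "Min (range (\<lambda>i. aQ $ i)) \<in> range (\<lambda>i. aQ $ i)" by (rule Min_in) auto
    ultimately show ?thesis unfolding amin_def using aP_pos aQ_pos by auto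
  qed
  have aminP: "amin \<le> aP $ i" for i unfolding amin_def by (rule min.coboundedI1, rule Min_le) auto
  have aminQ: "amin \<le> aQ $ i" for i unfolding amin_def by (rule min.coboundedI2, rule Min_le) auto
  have HG': "has_gradient (dual_fun ?R ?X v0 vlo vhi plo phi qlo qhi aP bP cP aQ bQ cQ) G ?mu"
    using HG unfolding D_def .
  have Geq: "G = (vlo - ?V ps qs, ?V ps qs - vhi)"
    using grad_eq[OF aP_pos aQ_pos p_le q_le HG'] unfolding ps_def qs_def .
  have gt: "g t = (vlo - ?V pt qt, ?V pt qt - vhi)" unfolding g_def pt_def qt_def by simp
  have diff: "G - g t = (?V pt qt - ?V ps qs, - (?V pt qt - ?V ps qs))"
    unfolding Geq gt by (simp add: algebra_simps)
  have nG: "norm (G - g t) = sqrt 2 * norm (?V pt qt - ?V ps qs)"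
  proof -
    have "norm (G - g t) = sqrt (2 * (norm (?V pt qt - ?V ps qs))^2)"
      unfolding diff norm_Pair norm_minus_cancel by simp
    also have "\<dots> = sqrt 2 * norm (?V pt qt - ?V ps qs)" by (simp add: real_sqrt_mult)
    finally show ?thesis .
  qed
  have Vd: "?V pt qt - ?V ps qs = ?R *v (pt - ps) + ?X *v (qt - qs)"
    unfolding voltage_def by (simp add: matrix_vector_mult_diff_distrib algebra_simps)
  have sRn: "0 \<le> sR" unfolding sR_def spec_norm_def by (rule onorm_pos_le) simp
  have sXn: "0 \<le> sX" unfolding sX_def spec_norm_def by (rule onorm_pos_le) simp
  have nV: "norm (?V pt qt - ?V ps qs) \<le> sR * norm (pt - ps) + sX * norm (qt - qs)"
  proof -
    have "norm (?V pt qt - ?V ps qs) \<le> norm (?R *v (pt - ps)) + norm (?X *v (qt - qs))"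
      unfolding Vd by (rule norm_triangle_ineq)
    also have "\<dots> \<le> sR * norm (pt - ps) + sX * norm (qt - qs)"
      unfolding sR_def sX_def spec_norm_def by (intro add_mono onorm) simp_all
    finally show ?thesis .
  qed
  have VvQ: "cQ.Vv t = cP.Vv t" by (simp add: cP.Vv_def cQ.Vv_def)
  have m: "\<And>k. fst ?mu $ k - snd ?mu $ k = lamlo t $ k - lamhi t $ k" by simp
  have pb0: "norm (pt - ps) \<le> spec_norm ?R * norm (cP.Vv t) / amin"
  proof -
    note X = cP.p_bound[OF r_nonneg aP_pos amin_pos aminP, where \<mu>="?mu" and t=t and b=bP and lo=plo and hi=phi]
    have "norm ((\<chi> i. clamp ((zP t $ i - bP $ i) / aP $ i) (plo $ i) (phi $ i)) -
       pst ?R aP bP plo phi ?mu) \<le> spec_norm ?R * norm (cP.Vv t) / amin"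
      by (rule X) (rule m)
    then show ?thesis unfolding pt_def ps_def .
  qed
  have qb0: "norm (qt - qs) \<le> spec_norm ?X * norm (cP.Vv t) / amin"
  proof -
    note X = cQ.p_bound[OF x_nonneg aQ_pos amin_pos aminQ, where \<mu>="?mu" and t=t and b=bQ and lo=qlo and hi=qhi]
    have "norm ((\<chi> i. clamp ((zQ t $ i - bQ $ i) / aQ $ i) (qlo $ i) (qhi $ i)) -
       pst ?X aQ bQ qlo qhi ?mu) \<le> spec_norm ?X * norm (cP.Vv t) / amin"
      by (rule X) (rule m)
    then show ?thesis unfolding qt_def qs_def .
  qed
  have pb: "norm (pt - ps) \<le> sR * A / amin" using pb0 unfolding sR_def A_def .
  have qb: "norm (qt - qs) \<le> sX * A / amin" using qb0 unfolding sX_def A_def .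
  have lamI_E: "cP.lamI s k = fst (lamE s) $ k - snd (lamE s) $ k" for s k
    by (simp add: cP.lamI_def lamE_def)
  have Ab: "A \<le> sqrt 2 * S"
  proof -
    have "A = norm (\<chi> k. \<Sum>\<tau>\<in>{int t - int t0..<int t}. \<bar>(fst (lamE (\<tau>+1)) $ k - snd (lamE (\<tau>+1)) $ k) - (fst (lamE \<tau>) $ k - snd (lamE \<tau>) $ k)\<bar>)"
      unfolding A_def cP.Vv_def lamI_E t0_def ..
    also have "\<dots> \<le> sqrt 2 * S" unfolding S_def by (rule V_bound)
    finally show ?thesis .
  qed
  have h1: "sR * norm (pt - ps) \<le> sR * (sR * A / amin)" using pb sRn by (rule mult_left_mono)
  have h2: "sX * norm (qt - qs) \<le> sX * (sX * A / amin)" using qb sXn by (rule mult_left_mono)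
  have h3: "sR * (sR * A / amin) + sX * (sX * A / amin) = (sR^2 + sX^2) / amin * A"
    by (simp add: power2_eq_square algebra_simps add_divide_distrib)
  have cn: "0 \<le> (sR^2 + sX^2) / amin" using amin_pos by simp
  have h4: "(sR^2 + sX^2) / amin * A \<le> (sR^2 + sX^2) / amin * (sqrt 2 * S)" using Ab cn by (rule mult_left_mono)
  have nv: "norm (?V pt qt - ?V ps qs) \<le> (sR^2 + sX^2) / amin * (sqrt 2 * S)"
    using nV h1 h2 h3 h4 by linarith
  have Leq: "L = 2 * (sR^2 + sX^2) / amin" unfolding L_def amin_def sR_def sX_def ..
  have main: "norm (G - g t) \<le> L * S"
  proof -
    have "norm (G - g t) \<le> sqrt 2 * ((sR^2 + sX^2) / amin * (sqrt 2 * S))"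
      unfolding nG using nv by (intro mult_left_mono) auto
    also have "\<dots> = (sqrt 2 * sqrt 2) * ((sR^2 + sX^2) / amin) * S" by (simp only: mult_ac)
    also have "\<dots> = L * S" unfolding Leq by simp
    finally show ?thesis .
  qed
  have Sn: "0 \<le> S" unfolding S_def by (intro sum_nonneg) simp
  have Ln: "0 \<le> L" unfolding Leq using amin_pos by simp
  have one: "1 \<le> sqrt (real CARD('n))"
  proof -
    have "(1::real) \<le> real CARD('n)" by (simp add: Suc_le_eq)
    then show ?thesis using real_sqrt_le_mono[of 1] by simp
  qed
  have "1 * S \<le> sqrt (real CARD('n)) * S" using one Sn by (rule mult_right_mono)
  then have "L * S \<le> L * (sqrt (real CARD('n)) * S)" using Ln by (simp add: mult_left_mono)
  then have "L * S \<le> L * sqrt (real CARD('n)) * S" by (simp add: mult.assoc)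
  then show "norm (G - g t) \<le> L * sqrt (real CARD('n))
              * (\<Sum>s\<in>{int t - int t0 ..< int t}. norm (lamE s - lamE (s + 1)))"
    using main unfolding S_def by linarith
qed



end
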